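(* Let $k>0$ and $\lambda>0$, and let $X$ have the non-central chi-square distribution $\chi_k'^2(\lambda)$, i.e. $X$ has probability density function $$p(x)=\frac{1}{2}\mathrm{e}^{-(x+\lambda)/2}\Big(\frac{x}{\lambda}\Big)^{k/4-1/2}I_{\frac{k}{2}-1}(\sqrt{\lambda x}),\quad x>0,$$ where $I_\nu(x)=\sum_{m=0}^\infty\frac{1}{\Gamma(\nu+m+1)m!}\big(\frac{x}{2}\big)^{\nu+2m}$ is the modified Bessel function of the first kind. Let $f$ be twice differentiable on $(0,\infty)$ and such that $\mathbb{E}|Xf^{(j)}(X)|<\infty$ for $j=0,1,2$, and $\mathbb{E}|f^{(i)}(X)|<\infty$ for $i=0,1$. Then $$\mathbb{E}\big[4Xf''(X)+(2k-4X)f'(X)+(X-k-\lambda)f(X)\big]=0.$$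
   Context: $f^{(0)}\equiv f$, and $f^{(j)}$ denotes the $j$-th derivative of $f$. (For integer $k$, $\chi_k'^2(\lambda)$ is the law of $\sum_{i=1}^k X_i^2$ with $X_i\sim N(\mu_i,1)$ independent and $\lambda=\sum_i\mu_i^2$.) *)

theory Defs
  imports "HOL-Probability.Probability"
begin

definition bessel_I :: "real \<Rightarrow> real \<Rightarrow> real" where
  "bessel_I nu x = (\<Sum>m. (x / 2) powr (nu + 2 * real m) / (Gamma (nu + real m + 1) * fact m))"

definition ncchisq_density :: "real \<Rightarrow> real \<Rightarrow> real \<Rightarrow> real" where
  "ncchisq_density k lam x =
     (if x > 0 then (1/2) * exp (-(x + lam) / 2) * (x / lam) powr (k / 4 - 1 / 2)
                      * bessel_I (k / 2 - 1) (sqrt (lam * x))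
      else 0)"

end

theory Submission
  imports Defs
begin


definition cc :: "real \<Rightarrow> real \<Rightarrow> nat \<Rightarrow> real" where
  "cc k lam m = (lam/4)^m / (Gamma (k/2 + real m) * fact m)"

lemma cc_Suc:
  assumes "k > 0"
  shows "cc k lam (Suc m) = cc k lam m * (lam/4) / ((k/2 + real m) * (real m + 1))"
proof -
  have g: "Gamma (k/2 + real (Suc m)) = (k/2 + real m) * Gamma (k/2 + real m)"
  proof -
    have "k/2 + real m \<notin> \<int>\<^sub>\<le>\<^sub>0" using assms by (auto elim!: nonpos_Ints_cases)
    then show ?thesis using Gamma_plus1[of "k/2 + real m"] by (simp add: add.assoc add.commute)
  qed
  have "Gamma (k/2 + real m) > 0" using assms by (intro Gamma_real_pos) auto
  moreover have "k/2 + real m > 0" using assms by auto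
  ultimately show ?thesis unfolding cc_def g
    by (simp add: field_simps)
qed

lemma cc_nonneg: "k > 0 \<Longrightarrow> lam \<ge> 0 \<Longrightarrow> cc k lam m \<ge> 0"
  unfolding cc_def by (intro divide_nonneg_pos mult_pos_pos Gamma_real_pos) auto

lemma diffs_cc:
  assumes "k > 0"
  shows "diffs (cc k lam) m = cc k lam m * lam / (2*k + 4 * real m)"
proof -
  have "k/2 + real m > 0" using assms by auto
  then have a: "k/2 + real m \<noteq> 0" "real m + 1 \<noteq> 0" "2*k + 4 * real m \<noteq> 0" by auto
  have "diffs (cc k lam) m = (real m + 1) * (cc k lam m * (lam/4) / ((k/2 + real m) * (real m + 1)))"
    unfolding diffs_def cc_Suc[OF assms] by (simp add: add.commute)
  also have "\<dots> = cc k lam m * lam / (2*k + 4 * real m)"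
    using a by (simp add: divide_simps)
  finally show ?thesis .
qed

lemma cc_summable:
  assumes "k > 0"
  shows "summable (\<lambda>m. cc k lam m * y ^ m)"
proof (rule summable_ratio_test[where c="1/2" and N="nat \<lceil>\<bar>y\<bar> * \<bar>lam\<bar> / 2\<rceil> + 1"])
  fix n assume n: "n \<ge> nat \<lceil>\<bar>y\<bar> * \<bar>lam\<bar> / 2\<rceil> + 1"
  have n1: "real n \<ge> 1" using n by auto
  have ny: "real n + 1 \<ge> \<bar>y\<bar> * \<bar>lam\<bar> / 2" using n by linarith
  have kn: "k/2 + real n \<ge> 1" using n1 assms by auto
  have "norm (cc k lam (Suc n) * y ^ Suc n) = norm (cc k lam n * y ^ n) * (\<bar>y\<bar> * \<bar>lam\<bar> / 4 / ((k/2 + real n) * (real n + 1)))"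
  proof -
    have pos: "(k/2 + real n) * (real n + 1) > 0" using kn by auto
    have "cc k lam (Suc n) * y ^ Suc n = (cc k lam n * y ^ n) * (y * lam / 4 / ((k/2 + real n) * (real n + 1)))"
      unfolding cc_Suc[OF assms] by (simp add: field_simps)
    then have "norm (cc k lam (Suc n) * y ^ Suc n) = \<bar>(cc k lam n * y ^ n) * (y * lam / 4 / ((k/2 + real n) * (real n + 1)))\<bar>"
      by simp
    also have "\<dots> = \<bar>cc k lam n * y ^ n\<bar> * (\<bar>y\<bar> * \<bar>lam\<bar> / 4 / \<bar>(k/2 + real n) * (real n + 1)\<bar>)"
      by (simp add: abs_mult abs_divide)
    finally show ?thesis using pos by simp

  qed
  also have "\<dots> \<le> norm (cc k lam n * y ^ n) * (1/2)"
  proof (rule mult_left_mono)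
    have "(k/2 + real n) * (real n + 1) \<ge> 1 * (real n + 1)"
      using kn by (intro mult_right_mono) auto
    then have "real n + 1 \<le> (k/2 + real n) * (real n + 1)" by simp
    then have "(k/2 + real n) * (real n + 1) \<ge> \<bar>y\<bar> * \<bar>lam\<bar> / 2" using ny by linarith
    moreover have "(k/2 + real n) * (real n + 1) > 0" using kn by auto
    ultimately show "\<bar>y\<bar> * \<bar>lam\<bar> / 4 / ((k/2 + real n) * (real n + 1)) \<le> 1/2"
      by (simp add: divide_simps mult.commute)
  qed simp
  finally show "norm (cc k lam (Suc n) * y ^ Suc n) \<le> 1/2 * norm (cc k lam n * y ^ n)" by simp
qed simp

definition hh :: "real \<Rightarrow> real \<Rightarrow> real \<Rightarrow> real" where
  "hh k lam x = (\<Sum>m. cc k lam m * x ^ m)"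
definition hh1 :: "real \<Rightarrow> real \<Rightarrow> real \<Rightarrow> real" where
  "hh1 k lam x = (\<Sum>m. diffs (cc k lam) m * x ^ m)"
definition hh2 :: "real \<Rightarrow> real \<Rightarrow> real \<Rightarrow> real" where
  "hh2 k lam x = (\<Sum>m. diffs (diffs (cc k lam)) m * x ^ m)"

lemma cc_summable1: "k > 0 \<Longrightarrow> summable (\<lambda>m. diffs (cc k lam) m * y ^ m)"
  by (rule termdiff_converges_all) (rule cc_summable)

lemma cc_summable2: "k > 0 \<Longrightarrow> summable (\<lambda>m. diffs (diffs (cc k lam)) m * y ^ m)"
  by (rule termdiff_converges_all) (rule cc_summable1)

lemma hh_deriv: "k > 0 \<Longrightarrow> (hh k lam has_real_derivative hh1 k lam x) (at x)"
  unfolding hh_def[abs_def] hh1_def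
  by (rule termdiffs_strong_converges_everywhere) (rule cc_summable)

lemma hh1_deriv: "k > 0 \<Longrightarrow> (hh1 k lam has_real_derivative hh2 k lam x) (at x)"
  unfolding hh1_def[abs_def] hh2_def
  by (rule termdiffs_strong_converges_everywhere) (rule cc_summable1)

lemma hh_ode:
  assumes k: "k > 0"
  shows "x * hh2 k lam x + (k/2) * hh1 k lam x = (lam/4) * hh k lam x"
proof -
  define d where "d = diffs (cc k lam)"
  define g where "g m = real m * d m * x ^ m" for m
  have "(\<lambda>m. x * (diffs d m * x ^ m)) sums (x * hh2 k lam x)"
    unfolding hh2_def d_def by (intro sums_mult summable_sums cc_summable2[OF k])
  moreover have "(\<lambda>m. x * (diffs d m * x ^ m)) = (\<lambda>m. g (Suc m))"
    by (auto simp: g_def diffs_def fun_eq_iff)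
  ultimately have "g sums (x * hh2 k lam x)"
    using sums_Suc_iff[of g] by (simp add: g_def)
  moreover have "(\<lambda>m. (k/2) * (d m * x ^ m)) sums ((k/2) * hh1 k lam x)"
    unfolding hh1_def d_def by (intro sums_mult summable_sums cc_summable1[OF k])
  ultimately have "(\<lambda>m. g m + (k/2) * (d m * x ^ m)) sums (x * hh2 k lam x + (k/2) * hh1 k lam x)"
    by (rule sums_add)
  moreover have "(\<lambda>m. g m + (k/2) * (d m * x ^ m)) = (\<lambda>m. (lam/4) * (cc k lam m * x ^ m))"
  proof
    fix m
    have "2*k + 4 * real m > 0" using k by auto
    have "g m + (k/2) * (d m * x ^ m) = ((real m + k/2) / (2*k + 4 * real m)) * (cc k lam m * lam * x ^ m)"
      unfolding g_def d_def diffs_cc[OF k] using \<open>2*k + 4 * real m > 0\<close>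
      by (simp add: divide_simps) (simp add: algebra_simps)
    also have "(real m + k/2) / (2*k + 4 * real m) = 1/4"
      using \<open>2*k + 4 * real m > 0\<close> by (simp add: divide_simps)
    finally show "g m + (k/2) * (d m * x ^ m) = (lam/4) * (cc k lam m * x ^ m)" by simp
  qed
  moreover have "(\<lambda>m. (lam/4) * (cc k lam m * x ^ m)) sums ((lam/4) * hh k lam x)"
    unfolding hh_def by (intro sums_mult summable_sums cc_summable[OF k])
  ultimately show ?thesis using sums_unique2 by metis
qed

lemma hh_nonneg: "k > 0 \<Longrightarrow> lam \<ge> 0 \<Longrightarrow> x \<ge> 0 \<Longrightarrow> hh k lam x \<ge> 0"
  unfolding hh_def by (intro suminf_nonneg cc_summable mult_nonneg_nonneg cc_nonneg) auto

lemma hh1_nonneg: 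
  assumes k: "k > 0" and "lam \<ge> 0" "x \<ge> 0" shows "hh1 k lam x \<ge> 0"
proof -
  have s: "summable (\<lambda>m. cc k lam m * lam / (2*k + 4 * real m) * x ^ m)"
    using cc_summable1[OF k, of lam x] unfolding diffs_cc[OF k] .
  show ?thesis unfolding hh1_def diffs_cc[OF k]
    by (rule suminf_nonneg[OF s]) (use assms cc_nonneg[OF k, of lam] in auto)
qed

lemma hh1_le: 
  assumes "k > 0" "lam \<ge> 0" "x \<ge> 0"
  shows "hh1 k lam x \<le> lam / (2*k) * hh k lam x"
proof -
  have "hh1 k lam x = (\<Sum>m. cc k lam m * lam / (2*k + 4 * real m) * x ^ m)"
    unfolding hh1_def diffs_cc[OF assms(1)] ..
  also have "\<dots> \<le> (\<Sum>m. lam / (2*k) * (cc k lam m * x ^ m))"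
  proof (rule suminf_le)
    fix m
    have c: "cc k lam m \<ge> 0" using cc_nonneg assms by auto
    have "lam / (2*k + 4 * real m) \<le> lam / (2*k)"
      using assms by (intro divide_left_mono) auto
    then have "cc k lam m * (lam / (2*k + 4 * real m)) * x ^ m \<le> cc k lam m * (lam / (2*k)) * x ^ m"
      using c assms by (intro mult_right_mono mult_left_mono) auto
    then show "cc k lam m * lam / (2*k + 4 * real m) * x ^ m \<le> lam / (2*k) * (cc k lam m * x ^ m)"
      by (simp add: algebra_simps)
  next
    show "summable (\<lambda>m. cc k lam m * lam / (2*k + 4 * real m) * x ^ m)"
      using cc_summable1[OF assms(1), of lam x] unfolding diffs_cc[OF assms(1)] .
    show "summable (\<lambda>m. lam / (2*k) * (cc k lam m * x ^ m))"
      by (intro summable_mult cc_summable assms)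
  qed
  also have "\<dots> = lam / (2*k) * hh k lam x"
    unfolding hh_def by (rule suminf_mult[OF cc_summable[OF assms(1)]])
  finally show ?thesis .
qed

definition Cst :: "real \<Rightarrow> real \<Rightarrow> real" where
  "Cst k lam = exp (-lam/2) / (2 * 2 powr (k/2-1))"

lemma Cst_pos: "Cst k lam > 0" unfolding Cst_def by simp

lemma density_eq:
  assumes k: "k > 0" and lam: "lam > 0" and x: "x > 0"
  shows "ncchisq_density k lam x = Cst k lam * (x powr (k/2-1) * exp (-x/2)) * hh k lam x"
proof -
  define s where "s = sqrt (lam * x)"
  define nu where "nu = k/2 - 1"
  have s: "s > 0" using lam x by (simp add: s_def)
  have s2: "s^2 = lam * x" using lam x by (simp add: s_def)
  have trm: "(s/2) powr (nu + 2 * real m) / (Gamma (nu + real m + 1) * fact m)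
      = (s/2) powr nu * (cc k lam m * x ^ m)" for m
  proof -
    have "(s/2) powr (nu + 2 * real m) = (s/2) powr nu * (s/2) ^ (2*m)"
      using s by (simp add: powr_add powr_realpow[symmetric])
    also have "(s/2) ^ (2*m) = (lam/4)^m * x^m"
      by (simp add: power_mult power_divide s2 power_mult_distrib)
    finally show ?thesis unfolding cc_def nu_def by (simp add: algebra_simps)
  qed
  have "bessel_I nu s = (\<Sum>m. (s/2) powr nu * (cc k lam m * x ^ m))"
    unfolding bessel_I_def trm ..
  also have "\<dots> = (s/2) powr nu * hh k lam x"
    unfolding hh_def by (rule suminf_mult[OF cc_summable[OF k]])
  finally have b: "bessel_I nu s = (s/2) powr nu * hh k lam x" .
  have "(x / lam) powr (k/4 - 1/2) * (s/2) powr nu = x powr nu / 2 powr nu"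
  proof -
    have "(s/2) powr nu = (lam * x) powr (nu/2) / 2 powr nu"
    proof -
      have "s powr nu = ((lam * x) powr (1/2)) powr nu" using lam x by (simp add: s_def powr_half_sqrt)
      also have "\<dots> = (lam * x) powr (nu/2)" by (simp add: powr_powr)
      finally show ?thesis using s by (simp add: powr_divide)
    qed
    moreover have "(x / lam) powr (k/4 - 1/2) = (x / lam) powr (nu/2)"
    proof -
      have e: "k/4 - 1/2 = nu/2" by (simp add: nu_def field_simps)
      show ?thesis by (simp only: e)
    qed
    moreover have "(x / lam) powr (nu/2) * (lam * x) powr (nu/2) = (x * x) powr (nu/2)"
      using lam x by (simp add: powr_mult[symmetric])
    moreover have "(x * x) powr (nu/2) = x powr nu"
      using x by (simp add: powr_mult powr_add[symmetric])
    ultimately show ?thesis by simp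
  qed
  then show ?thesis
    using x unfolding ncchisq_density_def Cst_def s_def[symmetric] nu_def[symmetric]
    by (simp add: b exp_add[symmetric] exp_diff field_simps)
qed

definition BB :: "real \<Rightarrow> real \<Rightarrow> (real \<Rightarrow> real) \<Rightarrow> (real \<Rightarrow> real) \<Rightarrow> real \<Rightarrow> real" where
  "BB k lam f f' x = Cst k lam * 2 * (x powr (k/2) * exp (-x/2)) *
     (2 * hh k lam x * f' x - (hh k lam x + 2 * hh1 k lam x) * f x)"

lemma BB_alg:
  fixes C P e x h h1 h2 f f' f'' k lam :: real
  assumes "x * h2 + (k/2) * h1 = (lam/4) * h"
  shows "C * 2 * (((k/2) * P * e - x * P * e / 2) * (2 * h * f' - (h + 2 * h1) * f)
     + x * P * e * (2 * h1 * f' + 2 * h * f'' - (h1 + 2 * h2) * f - (h + 2 * h1) * f'))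
   = C * P * e * h * (4 * x * f'' + (2 * k - 4 * x) * f' + (x - k - lam) * f)"
  using assms by algebra

lemma BB_deriv:
  assumes k: "k > 0" and lam: "lam > 0" and x: "x > 0"
    and df: "(f has_real_derivative f' x) (at x)"
    and df': "(f' has_real_derivative f'' x) (at x)"
  shows "(BB k lam f f' has_real_derivative
     ncchisq_density k lam x * (4 * x * f'' x + (2 * k - 4 * x) * f' x + (x - k - lam) * f x)) (at x)"
proof -
  define P where "P = x powr (k/2 - 1)"
  define e where "e = exp (-x/2)"
  have xp: "x powr (k/2) = x * P" using x by (simp add: P_def powr_diff)
  have d1: "((\<lambda>x. x powr (k/2) * exp (-x/2)) has_real_derivative ((k/2) * P * e - x * P * e / 2)) (at x)"
    using x by (auto intro!: derivative_eq_intros simp: P_def e_def xp)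
  have d2: "((\<lambda>x. 2 * hh k lam x * f' x - (hh k lam x + 2 * hh1 k lam x) * f x) has_real_derivative
      (2 * hh1 k lam x * f' x + 2 * hh k lam x * f'' x - (hh1 k lam x + 2 * hh2 k lam x) * f x
        - (hh k lam x + 2 * hh1 k lam x) * f' x)) (at x)"
    by (auto intro!: derivative_eq_intros hh_deriv[OF k] hh1_deriv[OF k] df df')
  have "(BB k lam f f' has_real_derivative Cst k lam * 2 * (((k/2) * P * e - x * P * e / 2) *
       (2 * hh k lam x * f' x - (hh k lam x + 2 * hh1 k lam x) * f x)
     + x * P * e * (2 * hh1 k lam x * f' x + 2 * hh k lam x * f'' x - (hh1 k lam x + 2 * hh2 k lam x) * f x
        - (hh k lam x + 2 * hh1 k lam x) * f' x))) (at x)"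
    unfolding BB_def[abs_def]
    using DERIV_cmult[OF DERIV_mult[OF d1 d2], of "Cst k lam * 2"]
    by (simp add: xp e_def algebra_simps)
  also have "Cst k lam * 2 * (((k/2) * P * e - x * P * e / 2) *
       (2 * hh k lam x * f' x - (hh k lam x + 2 * hh1 k lam x) * f x)
     + x * P * e * (2 * hh1 k lam x * f' x + 2 * hh k lam x * f'' x - (hh1 k lam x + 2 * hh2 k lam x) * f x
        - (hh k lam x + 2 * hh1 k lam x) * f' x))
    = Cst k lam * P * e * hh k lam x * (4 * x * f'' x + (2 * k - 4 * x) * f' x + (x - k - lam) * f x)"
    by (rule BB_alg[OF hh_ode[OF k]])
  also have "\<dots> = ncchisq_density k lam x * (4 * x * f'' x + (2 * k - 4 * x) * f' x + (x - k - lam) * f x)"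
    unfolding density_eq[OF k lam x] P_def e_def by simp
  finally show ?thesis .
qed

lemma density_nonneg:
  assumes k: "k > 0" and lam: "lam > 0"
  shows "ncchisq_density k lam x \<ge> 0"
proof (cases "x > 0")
  case True
  then show ?thesis unfolding density_eq[OF k lam True]
    using hh_nonneg[OF k, of lam x] lam Cst_pos[of k lam] by (intro mult_nonneg_nonneg) auto
qed (simp add: ncchisq_density_def)

lemma BB_bound:
  assumes k: "k > 0" and lam: "lam > 0" and x: "x > 0"
  shows "\<bar>BB k lam f f' x\<bar> / x \<le> 2 * ncchisq_density k lam x * (2 * \<bar>f' x\<bar> + (1 + lam / k) * \<bar>f x\<bar>)"
proof -
  define P where "P = x powr (k/2 - 1)"
  define e where "e = exp (-x/2)"
  define h where "h = hh k lam x"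
  define h1 where "h1 = hh1 k lam x"
  define C where "C = Cst k lam"
  have xp: "x powr (k/2) = x * P" using x by (simp add: P_def powr_diff)
  have P: "P > 0" "e > 0" "C > 0" using x by (auto simp: P_def e_def C_def Cst_pos)
  have h: "h \<ge> 0" "h1 \<ge> 0" "h1 \<le> lam / (2*k) * h"
    using hh_nonneg[OF k, of lam x] hh1_nonneg[OF k, of lam x] hh1_le[OF k, of lam x] lam x
    by (auto simp: h_def h1_def)
  have "\<bar>2 * h * f' x - (h + 2 * h1) * f x\<bar> \<le> 2 * h * \<bar>f' x\<bar> + (h + 2 * h1) * \<bar>f x\<bar>"
  proof -
    have "\<bar>2 * h * f' x - (h + 2 * h1) * f x\<bar> \<le> \<bar>2 * h * f' x\<bar> + \<bar>(h + 2 * h1) * f x\<bar>"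
      by (rule abs_triangle_ineq4)
    also have "\<bar>2 * h * f' x\<bar> = 2 * h * \<bar>f' x\<bar>" using h by (simp add: abs_mult)
    also have "\<bar>(h + 2 * h1) * f x\<bar> = (h + 2 * h1) * \<bar>f x\<bar>" using h by (simp add: abs_mult)
    finally show ?thesis .
  qed
  also have "\<dots> \<le> 2 * h * \<bar>f' x\<bar> + (h * (1 + lam / k)) * \<bar>f x\<bar>"
  proof -
    have "h + 2 * h1 \<le> h * (1 + lam / k)" using h k by (simp add: field_simps)
    then show ?thesis by (intro add_left_mono mult_right_mono) auto
  qed
  finally have W: "\<bar>2 * h * f' x - (h + 2 * h1) * f x\<bar> \<le> h * (2 * \<bar>f' x\<bar> + (1 + lam / k) * \<bar>f x\<bar>)"
    by (simp add: algebra_simps)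
  have "\<bar>BB k lam f f' x\<bar> / x = 2 * C * P * e * \<bar>2 * h * f' x - (h + 2 * h1) * f x\<bar>"
    unfolding BB_def xp using x P by (simp add: abs_mult C_def e_def h_def h1_def)
  also have "\<dots> \<le> 2 * C * P * e * (h * (2 * \<bar>f' x\<bar> + (1 + lam / k) * \<bar>f x\<bar>))"
    using P W by (intro mult_left_mono) auto
  also have "\<dots> = 2 * ncchisq_density k lam x * (2 * \<bar>f' x\<bar> + (1 + lam / k) * \<bar>f x\<bar>)"
    unfolding density_eq[OF k lam x] by (simp add: C_def P_def e_def h_def)
  finally show ?thesis .
qed




lemma small_point:
  fixes \<beta> :: "real \<Rightarrow> real"
  assumes int: "integrable lborel \<beta>" and nn: "\<And>x. \<beta> x \<ge> 0" and a: "a > 0" and d: "\<delta> > 0"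
  shows "\<exists>x\<in>{a..2*a}. \<beta> x \<le> ((\<integral>y. indicator {a..2*a} y * \<beta> y \<partial>lborel) + \<delta>) / a"
proof (rule ccontr)
  define c where "c = ((\<integral>y. indicator {a..2*a} y * \<beta> y \<partial>lborel) + \<delta>) / a"
  assume "\<not> ?thesis"
  then have lt: "\<And>x. x \<in> {a..2*a} \<Longrightarrow> c < \<beta> x" by (auto simp: c_def not_le)
  have "(\<integral>y. indicator {a..2*a} y * c \<partial>lborel) \<le> (\<integral>y. indicator {a..2*a} y * \<beta> y \<partial>lborel)"
  proof (rule integral_mono)
    show "integrable lborel (\<lambda>y. indicator {a..2*a} y * c)"
      using a by (intro integrable_mult_left integrable_real_indicator) (auto simp: emeasure_lborel_Icc_eq)
    show "integrable lborel (\<lambda>y. indicator {a..2*a} y * \<beta> y)"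
      using integrable_mult_indicator[OF _ int, of "{a..2*a}"] by simp
    show "indicator {a..2*a} y * c \<le> indicator {a..2*a} y * \<beta> y" for y
      using lt[of y] by (auto simp: indicator_def less_imp_le)
  qed
  moreover have "(\<integral>y. indicator {a..2*a} y * c \<partial>lborel) = a * c"
    using a by (simp add: integral_mult_left_zero)
  ultimately have "a * c \<le> (\<integral>y. indicator {a..2*a} y * \<beta> y \<partial>lborel)" using a by simp
  then show False using a d by (simp add: c_def)
qed

lemma tail_zero:
  fixes \<beta> :: "real \<Rightarrow> real"
  assumes int: "integrable lborel \<beta>" and S: "\<And>n. S n \<in> sets lborel"
    and ev: "\<And>x. eventually (\<lambda>n. x \<notin> S n) sequentially"
  shows "(\<lambda>n. \<integral>y. indicator (S n) y * \<beta> y \<partial>lborel) \<longlonglongrightarrow> 0"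
proof -
  have m1: "(\<lambda>y. 0::real) \<in> borel_measurable lborel" by simp
  have m2: "(\<lambda>y. indicator (S n) y * \<beta> y) \<in> borel_measurable lborel" for n
    using integrable_mult_indicator[OF S int] by simp
  have m3: "integrable lborel (\<lambda>y. \<bar>\<beta> y\<bar>)" using int by auto
  have m4: "AE x in lborel. (\<lambda>n. indicator (S n) x * \<beta> x) \<longlonglongrightarrow> 0"
  proof (rule AE_I2)
    fix x
    show "(\<lambda>n. indicator (S n) x * \<beta> x) \<longlonglongrightarrow> 0"
      by (rule tendsto_eventually) (use ev[of x] in \<open>auto elim: eventually_mono\<close>)
  qed
  have m5: "AE x in lborel. norm (indicator (S n) x * \<beta> x) \<le> \<bar>\<beta> x\<bar>" for n
    by (auto simp: indicator_def)
  show ?thesis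
    using integral_dominated_convergence[of "\<lambda>_. 0" lborel "\<lambda>n y. indicator (S n) y * \<beta> y", OF m1 m2 m3 m4 m5]
    by simp
qed

lemma AE_pos:
  fixes X :: "'a \<Rightarrow> real"
  assumes dist: "distributed M lborel X (\<lambda>x. ennreal (p x))"
    and pnn: "\<And>x. p x \<ge> 0" and p0: "\<And>x. x \<le> 0 \<Longrightarrow> p x = 0"
  shows "AE \<omega> in M. X \<omega> > 0"
proof -
  have pm: "(\<lambda>x. ennreal (p x)) \<in> borel_measurable lborel"
    using distributed_borel_measurable[OF dist] .
  have Xm: "X \<in> measurable M lborel" using distributed_measurable[OF dist] .
  have "AE x in density lborel (\<lambda>x. ennreal (p x)). x > 0"
    unfolding AE_density[OF pm]
  proof (rule AE_I2, rule impI)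
    fix x assume "0 < ennreal (p x)"
    show "x > 0"
    proof (rule ccontr)
      assume "\<not> x > 0"
      then have "p x = 0" by (intro p0) simp
      then show False using \<open>0 < ennreal (p x)\<close> by simp
    qed
  qed
  then have "AE x in distr M lborel X. x > 0"
    unfolding distributed_distr_eq_density[OF dist] .
  then show ?thesis
    by (subst (asm) AE_distr_iff[OF Xm]) auto
qed

lemma transfer:
  fixes g :: "real \<Rightarrow> real"
  assumes dist: "distributed M lborel X (\<lambda>x. ennreal (p x))"
    and pnn: "\<And>x. p x \<ge> 0" and AEpos: "AE \<omega> in M. X \<omega> > 0"
    and gm: "(\<lambda>x. indicator {0<..} x * g x) \<in> borel_measurable borel"
    and int: "integrable M (\<lambda>\<omega>. g (X \<omega>))"
  shows "integrable lborel (\<lambda>x. p x * (indicator {0<..} x * g x))"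
    and "(\<integral>\<omega>. g (X \<omega>) \<partial>M) = (\<integral>x. p x * (indicator {0<..} x * g x) \<partial>lborel)"
proof -
  have Xm: "X \<in> measurable M borel" using distributed_measurable[OF dist] by simp
  have Gm: "(\<lambda>\<omega>. indicator {0<..} (X \<omega>) * g (X \<omega>)) \<in> borel_measurable M"
    using measurable_compose[OF Xm gm] by simp
  have ae: "AE \<omega> in M. g (X \<omega>) = indicator {0<..} (X \<omega>) * g (X \<omega>)"
    using AEpos by eventually_elim auto
  have intG: "integrable M (\<lambda>\<omega>. indicator {0<..} (X \<omega>) * g (X \<omega>))"
    by (rule integrable_cong_AE_imp[OF int Gm ae])
  have gm': "(\<lambda>x. indicator {0<..} x * g x) \<in> borel_measurable lborel" using gm by simp
  show "integrable lborel (\<lambda>x. p x * (indicator {0<..} x * g x))"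
    using distributed_integrable[OF dist gm'] pnn intG by simp
  have "(\<integral>\<omega>. g (X \<omega>) \<partial>M) = (\<integral>\<omega>. indicator {0<..} (X \<omega>) * g (X \<omega>) \<partial>M)"
    by (rule integral_cong_AE[OF borel_measurable_integrable[OF int] Gm ae])
  also have "\<dots> = (\<integral>x. p x * (indicator {0<..} x * g x) \<partial>lborel)"
    using distributed_integral[OF dist gm'] pnn by simp
  finally show "(\<integral>\<omega>. g (X \<omega>) \<partial>M) = (\<integral>x. p x * (indicator {0<..} x * g x) \<partial>lborel)" .
qed

lemma meas_cont:
  fixes g :: "real \<Rightarrow> real"
  assumes "\<And>x. x > 0 \<Longrightarrow> isCont g x"
  shows "(\<lambda>x. indicator {0<..} x * g x) \<in> borel_measurable borel"
proof -
  have "continuous_on {0<..} g" using assms by (intro continuous_at_imp_continuous_on) auto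
  then show ?thesis using borel_measurable_continuous_on_indicator[of "{0<..}" g] by simp
qed

lemma meas_deriv:
  fixes g g' :: "real \<Rightarrow> real"
  assumes d: "\<And>x. x > 0 \<Longrightarrow> (g has_real_derivative g' x) (at x)"
  shows "(\<lambda>x. indicator {0<..} x * g' x) \<in> borel_measurable borel"
proof -
  define G where "G x = indicator {0<..} x * g x" for x :: real
  have Gm[measurable]: "G \<in> borel_measurable borel"
    unfolding G_def by (rule meas_cont) (rule DERIV_isCont[OF d])
  define u where "u n x = indicator {0<..} x * ((G (x + 1 / Suc n) - G x) * Suc n)" for n :: nat and x :: real
  have um: "u n \<in> borel_measurable borel" for n
  proof -
    have sh: "(\<lambda>x::real. x + 1 / Suc n) \<in> borel_measurable borel"
      by (intro borel_measurable_continuous_onI continuous_intros)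
    have g1: "(\<lambda>x. G (x + 1 / Suc n)) \<in> borel_measurable borel"
      using measurable_compose[OF sh Gm] by simp
    have i: "(\<lambda>x::real. indicator {0<..} x :: real) \<in> borel_measurable borel"
      by (rule borel_measurable_indicator, rule borel_open, simp)
    show ?thesis unfolding u_def
      by (rule borel_measurable_times[OF i borel_measurable_times[OF borel_measurable_diff[OF g1 Gm] borel_measurable_const]])
  qed
  show ?thesis
  proof (rule borel_measurable_LIMSEQ_real[OF _ um])
    fix x :: real
    show "(\<lambda>n. u n x) \<longlonglongrightarrow> indicator {0<..} x * g' x"
    proof (cases "x > 0")
      case False then show ?thesis by (simp add: u_def)
    next
      case True
      have lim: "((\<lambda>y. (g y - g x) / (y - x)) \<longlongrightarrow> g' x) (at x)"
        using d[OF True] by (simp add: has_field_derivative_iff)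
      have seq: "(\<lambda>n. x + 1 / Suc n) \<longlonglongrightarrow> x"
        using tendsto_add[OF tendsto_const LIMSEQ_inverse_real_of_nat, of x] by (simp add: inverse_eq_divide)
      have "(\<lambda>n. (g (x + 1 / Suc n) - g x) / ((x + 1 / Suc n) - x)) \<longlonglongrightarrow> g' x"
      proof -
        have A: "\<forall>S. (\<forall>n. S n \<noteq> x) \<and> S \<longlonglongrightarrow> x \<longrightarrow> (\<lambda>n. (g (S n) - g x) / (S n - x)) \<longlonglongrightarrow> g' x"
          by (rule iffD2[OF LIMSEQ_SEQ_conv lim])
        have ne: "\<forall>n. x + 1 / real (Suc n) \<noteq> x" by simp
        show ?thesis by (rule A[rule_format, OF conjI[OF ne seq]])
      qed
      moreover have "u n x = (g (x + 1 / Suc n) - g x) / ((x + 1 / Suc n) - x)" for n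
      proof -
        have "x + 1 / Suc n > 0" using True by (simp add: add_pos_pos)
        then show ?thesis using True by (simp add: u_def G_def)
      qed
      ultimately show ?thesis using True by simp
    qed
  qed
qed

lemma ev_small: "x > 0 \<Longrightarrow> eventually (\<lambda>n. (1/2::real)^n < x) sequentially"
  using LIMSEQ_realpow_zero[of "1/2::real"] order_tendstoD(2) by auto

lemma ev_big: "eventually (\<lambda>n. x < (2::real)^n) sequentially"
proof -
  have "eventually (\<lambda>n. (1/2::real)^n < 1 / (\<bar>x\<bar> + 1)) sequentially"
    by (rule ev_small) (simp add: add_nonneg_pos)
  then show ?thesis
  proof (rule eventually_mono)
    fix n :: nat assume "(1/2::real)^n < 1 / (\<bar>x\<bar> + 1)"
    then have "1 / 2^n < 1 / (\<bar>x\<bar> + 1)" by (simp add: power_one_over)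
    then have "\<bar>x\<bar> + 1 < 2^n" by (simp add: divide_simps add_nonneg_pos)
    then show "x < 2^n" by linarith
  qed
qed

theorem proposition2p2:
  fixes M :: "'a measure" and X :: "'a \<Rightarrow> real"
    and k lam :: real and f f' f'' :: "real \<Rightarrow> real"
  assumes "prob_space M"
    and "k > 0" and "lam > 0"
    and "distributed M lborel X (\<lambda>x. ennreal (ncchisq_density k lam x))"
    and "\<And>x. x > 0 \<Longrightarrow> (f has_real_derivative f' x) (at x)"
    and "\<And>x. x > 0 \<Longrightarrow> (f' has_real_derivative f'' x) (at x)"
    and "integrable M (\<lambda>\<omega>. X \<omega> * f (X \<omega>))"
    and "integrable M (\<lambda>\<omega>. X \<omega> * f' (X \<omega>))"
    and "integrable M (\<lambda>\<omega>. X \<omega> * f'' (X \<omega>))"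
    and "integrable M (\<lambda>\<omega>. f (X \<omega>))"
    and "integrable M (\<lambda>\<omega>. f' (X \<omega>))"
  shows "(\<integral>\<omega>. 4 * X \<omega> * f'' (X \<omega>) + (2 * k - 4 * X \<omega>) * f' (X \<omega>)
                + (X \<omega> - k - lam) * f (X \<omega>) \<partial>M) = 0"
proof -
  note k = assms(2) and lam = assms(3) and dist = assms(4) and df = assms(5) and df' = assms(6)
  define p where "p = ncchisq_density k lam"
  define A where "A x = 4 * x * f'' x + (2 * k - 4 * x) * f' x + (x - k - lam) * f x" for x
  define B where "B = BB k lam f f'"
  have dist': "distributed M lborel X (\<lambda>x. ennreal (p x))" using dist by (simp add: p_def)
  have pnn: "\<And>x. p x \<ge> 0" unfolding p_def using density_nonneg[OF k lam] .
  have p0: "\<And>x. x \<le> 0 \<Longrightarrow> p x = 0" by (simp add: p_def ncchisq_density_def)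
  have AEpos: "AE \<omega> in M. X \<omega> > 0" by (rule AE_pos[OF dist' pnn p0])
  have m0[measurable]: "(\<lambda>x. indicator {0<..} x * f x) \<in> borel_measurable borel"
    by (rule meas_cont) (rule DERIV_isCont[OF df])
  have m1[measurable]: "(\<lambda>x. indicator {0<..} x * f' x) \<in> borel_measurable borel"
    by (rule meas_deriv[OF df])
  have m2[measurable]: "(\<lambda>x. indicator {0<..} x * f'' x) \<in> borel_measurable borel"
    by (rule meas_deriv[OF df'])
  have "(\<lambda>x. 4 * x * (indicator {0<..} x * f'' x) + (2 * k - 4 * x) * (indicator {0<..} x * f' x)
      + (x - k - lam) * (indicator {0<..} x * f x)) \<in> borel_measurable borel"
    by measurable
  moreover have "(\<lambda>x. 4 * x * (indicator {0<..} x * f'' x) + (2 * k - 4 * x) * (indicator {0<..} x * f' x)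
      + (x - k - lam) * (indicator {0<..} x * f x)) = (\<lambda>x. indicator {0<..} x * A x)"
    by (auto simp: A_def fun_eq_iff indicator_def)
  ultimately have mA: "(\<lambda>x. indicator {0<..} x * A x) \<in> borel_measurable borel" by simp
  have intA: "integrable M (\<lambda>\<omega>. A (X \<omega>))"
  proof -
    have "integrable M (\<lambda>\<omega>. 4 * (X \<omega> * f'' (X \<omega>)) + (2*k) * f' (X \<omega>) - 4 * (X \<omega> * f' (X \<omega>))
        + X \<omega> * f (X \<omega>) - (k + lam) * f (X \<omega>))"
    proof -
      have i1: "integrable M (\<lambda>\<omega>. 4 * (X \<omega> * f'' (X \<omega>)))" using assms(9) by simp
      have i2: "integrable M (\<lambda>\<omega>. (2*k) * f' (X \<omega>))" using assms(11) by simp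
      have i3: "integrable M (\<lambda>\<omega>. 4 * (X \<omega> * f' (X \<omega>)))" using assms(8) by simp
      have i4: "integrable M (\<lambda>\<omega>. (k + lam) * f (X \<omega>))" using assms(10) by simp
      show ?thesis
        by (rule Bochner_Integration.integrable_diff[OF Bochner_Integration.integrable_add[OF Bochner_Integration.integrable_diff[OF Bochner_Integration.integrable_add[OF i1 i2] i3] assms(7)] i4])
    qed
    moreover have "(\<lambda>\<omega>. 4 * (X \<omega> * f'' (X \<omega>)) + (2*k) * f' (X \<omega>) - 4 * (X \<omega> * f' (X \<omega>))
        + X \<omega> * f (X \<omega>) - (k + lam) * f (X \<omega>)) = (\<lambda>\<omega>. A (X \<omega>))"
      by (auto simp: A_def fun_eq_iff algebra_simps)
    ultimately show ?thesis by simp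
  qed
  define F where "F x = p x * (indicator {0<..} x * A x)" for x
  have intF: "integrable lborel F"
    unfolding F_def by (rule transfer(1)[OF dist' pnn AEpos mA intA])
  have goal_eq: "(\<integral>\<omega>. A (X \<omega>) \<partial>M) = (\<integral>x. F x \<partial>lborel)"
    unfolding F_def by (rule transfer(2)[OF dist' pnn AEpos mA intA])
  have int0: "integrable lborel (\<lambda>x. p x * (indicator {0<..} x * f x))"
    by (rule transfer(1)[OF dist' pnn AEpos m0 assms(10)])
  have int1: "integrable lborel (\<lambda>x. p x * (indicator {0<..} x * f' x))"
    by (rule transfer(1)[OF dist' pnn AEpos m1 assms(11)])

  have Bd: "\<And>x. x > 0 \<Longrightarrow> (B has_real_derivative p x * A x) (at x)"
  proof -
    fix x :: real assume x: "x > 0"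
    show "(B has_real_derivative p x * A x) (at x)"
      unfolding B_def p_def A_def by (rule BB_deriv[of k lam x f f' f'', OF k lam x df[OF x] df'[OF x]])
  qed
  have FTC: "(\<integral>x. indicator {a..b} x * F x \<partial>lborel) = B b - B a" if ab: "0 < a" "a \<le> b" for a b
  proof -
    have si: "set_integrable lborel {a..b} F"
      unfolding set_integrable_def using integrable_mult_indicator[OF _ intF, of "{a..b}"] by simp
    have "((\<lambda>x. p x * A x) has_integral (B b - B a)) {a..b}"
    proof (rule fundamental_theorem_of_calculus[OF ab(2)])
      fix x assume "x \<in> {a..b}"
      then have "x > 0" using ab by auto
      show "(B has_vector_derivative p x * A x) (at x within {a..b})"
        by (rule has_field_derivative_at_within[OF Bd[OF \<open>x > 0\<close>], unfolded has_real_derivative_iff_has_vector_derivative])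
    qed
    then have "(F has_integral (B b - B a)) {a..b}"
      by (rule has_integral_eq[rotated]) (use ab in \<open>auto simp: F_def\<close>)
    then have "integral {a..b} F = B b - B a" by (rule integral_unique)
    moreover have "(LINT x:{a..b}|lborel. F x) = integral {a..b} F"
      by (rule set_borel_integral_eq_integral(2)[OF si])
    ultimately show ?thesis unfolding set_lebesgue_integral_def by simp
  qed
  define \<beta> where "\<beta> x = indicator {0<..} x * (\<bar>B x\<bar> / x)" for x
  have Bc: "isCont B x" if "x > 0" for x using Bd[OF that] by (rule DERIV_isCont)
  have \<beta>m: "\<beta> \<in> borel_measurable borel"
    unfolding \<beta>_def[abs_def] by (rule meas_cont) (auto intro!: continuous_intros Bc)
  have \<beta>nn: "\<beta> x \<ge> 0" for x by (auto simp: \<beta>_def indicator_def)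
  define K where "K = 1 + lam / k"
  have Kp: "K > 0" using k lam by (simp add: K_def add_pos_pos)
  define bnd where "bnd x = 2 * (2 * \<bar>p x * (indicator {0<..} x * f' x)\<bar> + K * \<bar>p x * (indicator {0<..} x * f x)\<bar>)" for x
  have bnd_int: "integrable lborel bnd"
    unfolding bnd_def using int0 int1 by simp
  have \<beta>b: "norm (\<beta> x) \<le> norm (bnd x)" for x
  proof (cases "x > 0")
    case True
    have "\<bar>B x\<bar> / x \<le> 2 * p x * (2 * \<bar>f' x\<bar> + K * \<bar>f x\<bar>)"
      unfolding B_def p_def K_def by (rule BB_bound[OF k lam True])
    also have "\<dots> = bnd x" using True pnn[of x] by (simp add: bnd_def abs_mult algebra_simps)
    finally show ?thesis using True \<beta>nn[of x] by (simp add: \<beta>_def bnd_def)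
  next
    case False then show ?thesis by (simp add: \<beta>_def)
  qed
  have \<beta>int: "integrable lborel \<beta>"
    by (rule Bochner_Integration.integrable_bound[OF bnd_int]) (use \<beta>m \<beta>b in auto)
  define a :: "nat \<Rightarrow> real" where "a n = (1/2)^(Suc n)" for n
  define b :: "nat \<Rightarrow> real" where "b n = 2^n" for n
  have a2: "2 * a n = (1/2)^n" for n by (simp add: a_def)
  have apos: "a n > 0" for n by (simp add: a_def)
  have bpos: "b n > 0" for n by (simp add: b_def)
  define eA where "eA n = (\<integral>y. indicator {a n..2 * a n} y * \<beta> y \<partial>lborel)" for n
  define eB where "eB n = (\<integral>y. indicator {b n..2 * b n} y * \<beta> y \<partial>lborel)" for n
  have eA0: "eA \<longlonglongrightarrow> 0" unfolding eA_def[abs_def]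
  proof (rule tail_zero[OF \<beta>int])
    fix x :: real
    show "eventually (\<lambda>n. x \<notin> {a n..2 * a n}) sequentially"
    proof (cases "x > 0")
      case True
      show ?thesis using ev_small[OF True] by (rule eventually_mono) (auto simp: a2)
    next
      case False then show ?thesis using apos by (auto intro!: always_eventually simp: not_less)
          (metis apos linorder_not_le order_le_less_trans)
    qed
  qed simp
  have eB0: "eB \<longlonglongrightarrow> 0" unfolding eB_def[abs_def]
  proof (rule tail_zero[OF \<beta>int])
    fix x :: real
    show "eventually (\<lambda>n. x \<notin> {b n..2 * b n}) sequentially"
      using ev_big[of x] by (rule eventually_mono) (auto simp: b_def)
  qed simp
  define \<delta> :: "nat \<Rightarrow> real" where "\<delta> n = inverse (real (Suc n))" for n
  have \<delta>0: "\<delta> \<longlonglongrightarrow> 0" unfolding \<delta>_def by (rule LIMSEQ_inverse_real_of_nat)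
  have \<delta>pos: "\<delta> n > 0" for n by (simp add: \<delta>_def)
  have eAnn: "eA n \<ge> 0" for n unfolding eA_def by (intro integral_nonneg_AE) (auto simp: \<beta>nn)
  have eBnn: "eB n \<ge> 0" for n unfolding eB_def by (intro integral_nonneg_AE) (auto simp: \<beta>nn)
  have "\<forall>n. \<exists>x\<in>{a n..2 * a n}. \<beta> x \<le> (eA n + \<delta> n) / a n"
    unfolding eA_def using small_point[OF \<beta>int \<beta>nn apos \<delta>pos] by blast
  then obtain s where s: "\<And>n. s n \<in> {a n..2 * a n}" "\<And>n. \<beta> (s n) \<le> (eA n + \<delta> n) / a n"
    by metis
  have "\<forall>n. \<exists>x\<in>{b n..2 * b n}. \<beta> x \<le> (eB n + \<delta> n) / b n"
    unfolding eB_def using small_point[OF \<beta>int \<beta>nn bpos \<delta>pos] by blast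
  then obtain t where t: "\<And>n. t n \<in> {b n..2 * b n}" "\<And>n. \<beta> (t n) \<le> (eB n + \<delta> n) / b n"
    by metis
  have key: "\<bar>B y\<bar> \<le> 2 * (e + d)" if "c > 0" "y \<in> {c..2*c}" "\<beta> y \<le> (e + d) / c" "e + d \<ge> 0" for y c e d
  proof -
    have y: "y > 0" using that by auto
    have "\<bar>B y\<bar> = y * \<beta> y" using y by (simp add: \<beta>_def)
    also have "\<dots> \<le> (2 * c) * ((e + d) / c)"
      using that \<beta>nn[of y] by (intro mult_mono) auto
    also have "\<dots> = 2 * (e + d)" using that by simp
    finally show ?thesis .
  qed
  have Bs: "(\<lambda>n. B (s n)) \<longlonglongrightarrow> 0"
  proof (rule Lim_null_comparison)
    show "eventually (\<lambda>n. norm (B (s n)) \<le> 2 * (eA n + \<delta> n)) sequentially"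
    proof (rule always_eventually, rule allI)
      fix n have "eA n + \<delta> n \<ge> 0" using eAnn[of n] \<delta>pos[of n] by simp
      then show "norm (B (s n)) \<le> 2 * (eA n + \<delta> n)" using key[OF apos s(1) s(2)] by simp
    qed
    show "(\<lambda>n. 2 * (eA n + \<delta> n)) \<longlonglongrightarrow> 0"
      using tendsto_mult_right_zero[OF tendsto_add_zero[OF eA0 \<delta>0], of 2] by simp
  qed
  have Bt: "(\<lambda>n. B (t n)) \<longlonglongrightarrow> 0"
  proof (rule Lim_null_comparison)
    show "eventually (\<lambda>n. norm (B (t n)) \<le> 2 * (eB n + \<delta> n)) sequentially"
    proof (rule always_eventually, rule allI)
      fix n have "eB n + \<delta> n \<ge> 0" using eBnn[of n] \<delta>pos[of n] by simp
      then show "norm (B (t n)) \<le> 2 * (eB n + \<delta> n)" using key[OF bpos t(1) t(2)] by simp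
    qed
    show "(\<lambda>n. 2 * (eB n + \<delta> n)) \<longlonglongrightarrow> 0"
      using tendsto_mult_right_zero[OF tendsto_add_zero[OF eB0 \<delta>0], of 2] by simp
  qed
  have spos: "s n > 0" for n using s(1)[of n] apos[of n] by auto
  have st: "s n \<le> t n" for n
  proof -
    have "s n \<le> (1/2)^n" using s(1)[of n] a2[of n] by auto
    also have "(1/2::real)^n \<le> 1" by (simp add: power_le_one)
    also have "1 \<le> b n" by (simp add: b_def)
    also have "b n \<le> t n" using t(1)[of n] by auto
    finally show ?thesis .
  qed
  have J: "(\<lambda>n. \<integral>x. indicator {s n..t n} x * F x \<partial>lborel) = (\<lambda>n. B (t n) - B (s n))"
    using FTC[OF spos st] by simp
  have J0: "(\<lambda>n. \<integral>x. indicator {s n..t n} x * F x \<partial>lborel) \<longlonglongrightarrow> 0"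
    unfolding J using tendsto_diff[OF Bt Bs] by simp
  have JF: "(\<lambda>n. \<integral>x. indicator {s n..t n} x * F x \<partial>lborel) \<longlonglongrightarrow> (\<integral>x. F x \<partial>lborel)"
  proof -
    have m1: "F \<in> borel_measurable lborel" using intF by simp
    have m2: "(\<lambda>x. indicator {s n..t n} x * F x) \<in> borel_measurable lborel" for n
      using integrable_mult_indicator[OF _ intF, of "{s n..t n}"] by simp
    have m3: "integrable lborel (\<lambda>x. \<bar>F x\<bar>)" using intF by auto
    have m4: "AE x in lborel. (\<lambda>n. indicator {s n..t n} x * F x) \<longlonglongrightarrow> F x"
    proof (rule AE_I2)
      fix x :: real
      show "(\<lambda>n. indicator {s n..t n} x * F x) \<longlonglongrightarrow> F x"
      proof (cases "x > 0")
        case False then show ?thesis by (simp add: F_def)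
      next
        case True
        show ?thesis
        proof (rule tendsto_eventually)
          show "eventually (\<lambda>n. indicator {s n..t n} x * F x = F x) sequentially"
            using eventually_conj[OF ev_small[OF True] ev_big[of x]]
          proof (rule eventually_mono)
            fix n assume n: "(1/2::real)^n < x \<and> x < 2^n"
            have "s n \<le> x" using s(1)[of n] a2[of n] n by auto
            moreover have "x \<le> t n" using t(1)[of n] n by (auto simp: b_def)
            ultimately show "indicator {s n..t n} x * F x = F x" by simp
          qed
        qed
      qed
    qed
    have m5: "AE x in lborel. norm (indicator {s n..t n} x * F x) \<le> \<bar>F x\<bar>" for n
      by (auto simp: indicator_def)
    show ?thesis
      using integral_dominated_convergence[of F lborel "\<lambda>n x. indicator {s n..t n} x * F x", OF m1 m2 m3 m4 m5]
      by simp
  qed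
  have "(\<integral>x. F x \<partial>lborel) = 0" using LIMSEQ_unique[OF JF J0] .
  then have "(\<integral>\<omega>. A (X \<omega>) \<partial>M) = 0" using goal_eq by simp
  then show ?thesis by (simp add: A_def)
qed


end
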